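(* Every Alster space is Hurewicz.
   Context: A topological space $X$ is Alster if every cover of $X$ by $G_\delta$ subsets of $X$ such that each compact subset of $X$ is included in some member of the cover has a countable subcover. A point-cofinite cover of a space is an infinite open cover such that each point of the space belongs to all but finitely many members of the cover. A space $X$ is Hurewicz if for each sequence $\{\mathcal{U}_n\}_{n<\omega}$ of open covers of $X$, none of which has a finite subcover, there are finite $\mathcal{F}_n\subseteq\mathcal{U}_n$ such that $\{\bigcup\mathcal{F}_n : n<\omega\}$ is a point-cofinite cover of $X$. No separation axioms are assumed. *)

theory Defs
  imports "HOL-Analysis.Analysis"
begin

definition alster_space :: "'a topology \<Rightarrow> bool" where
  "alster_space X \<longleftrightarrow>
     (\<forall>\<G>. (\<forall>G\<in>\<G>. gdelta_in X G) \<and> \<Union>\<G> = topspace X \<and>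
          (\<forall>K. K \<subseteq> topspace X \<and> compactin X K \<longrightarrow> (\<exists>G\<in>\<G>. K \<subseteq> G))
       \<longrightarrow> (\<exists>\<H>. \<H> \<subseteq> \<G> \<and> countable \<H> \<and> \<Union>\<H> = topspace X))"

definition open_cover :: "'a topology \<Rightarrow> 'a set set \<Rightarrow> bool" where
  "open_cover X \<U> \<longleftrightarrow> (\<forall>U\<in>\<U>. openin X U) \<and> \<Union>\<U> = topspace X"

definition has_finite_subcover :: "'a topology \<Rightarrow> 'a set set \<Rightarrow> bool" where
  "has_finite_subcover X \<U> \<longleftrightarrow> (\<exists>\<V>. \<V> \<subseteq> \<U> \<and> finite \<V> \<and> \<Union>\<V> = topspace X)"

definition point_cofinite_cover :: "'a topology \<Rightarrow> 'a set set \<Rightarrow> bool" where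
  "point_cofinite_cover X \<U> \<longleftrightarrow> infinite \<U> \<and> open_cover X \<U> \<and>
     (\<forall>x\<in>topspace X. finite {U\<in>\<U>. x \<notin> U})"

definition hurewicz_space :: "'a topology \<Rightarrow> bool" where
  "hurewicz_space X \<longleftrightarrow>
     (\<forall>\<U> :: nat \<Rightarrow> 'a set set.
        (\<forall>n. open_cover X (\<U> n) \<and> \<not> has_finite_subcover X (\<U> n))
        \<longrightarrow> (\<exists>\<F> :: nat \<Rightarrow> 'a set set. (\<forall>n. finite (\<F> n) \<and> \<F> n \<subseteq> \<U> n) \<and>
               point_cofinite_cover X (range (\<lambda>n. \<Union>(\<F> n)))))"

end

theory Submission
  imports Defs
begin

theorem theorem2p3:
  fixes X :: "'a topology"
  assumes "alster_space X"
  shows "hurewicz_space X"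
  unfolding hurewicz_space_def
proof (intro allI impI)
  fix \<U> :: "nat \<Rightarrow> 'a set set"
  assume U: "\<forall>n. open_cover X (\<U> n) \<and> \<not> has_finite_subcover X (\<U> n)"
  have Uo: "\<And>n V. V \<in> \<U> n \<Longrightarrow> openin X V" and Ucov: "\<And>n. \<Union>(\<U> n) = topspace X"
    using U by (auto simp: open_cover_def)
  have nofin: "\<And>n \<V>. \<V> \<subseteq> \<U> n \<Longrightarrow> finite \<V> \<Longrightarrow> \<Union>\<V> \<noteq> topspace X"
    using U by (auto simp: has_finite_subcover_def)
  define P where "P F \<longleftrightarrow> (\<forall>n. finite (F n) \<and> F n \<subseteq> \<U> n)" for F :: "nat \<Rightarrow> 'a set set"
  define \<G> where "\<G> = {(\<Inter>n. \<Union>(F n)) | F. P F}"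
  have sub: "\<Union>(F n) \<subseteq> topspace X" if "P F" for F n
  proof
    fix x assume "x \<in> \<Union>(F n)"
    then obtain V where "V \<in> F n" "x \<in> V" by blast
    then have "V \<in> \<U> n" using that unfolding P_def by blast
    then show "x \<in> topspace X" using \<open>x \<in> V\<close> Ucov[of n] by blast
  qed
  have cK: "\<exists>G\<in>\<G>. K \<subseteq> G" if "compactin X K" for K
  proof -
    have "\<forall>n. \<exists>F. finite F \<and> F \<subseteq> \<U> n \<and> K \<subseteq> \<Union>F"
    proof
      fix n
      have "K \<subseteq> \<Union>(\<U> n)" using compactin_subset_topspace[OF that] Ucov[of n] by simp
      then show "\<exists>F. finite F \<and> F \<subseteq> \<U> n \<and> K \<subseteq> \<Union>F"
        using that Uo unfolding compactin_def by blast
    qed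
    then obtain F where F: "\<And>n. finite (F n) \<and> F n \<subseteq> \<U> n \<and> K \<subseteq> \<Union>(F n)" by metis
    then have "P F" by (auto simp: P_def)
    then have "(\<Inter>n. \<Union>(F n)) \<in> \<G>" unfolding \<G>_def by blast
    moreover have "K \<subseteq> (\<Inter>n. \<Union>(F n))" using F by (simp add: INF_greatest)
    ultimately show ?thesis by blast
  qed
  have gd: "gdelta_in X G" if "G \<in> \<G>" for G
  proof -
    obtain F where G: "G = (\<Inter>n. \<Union>(F n))" and PF: "P F"
      using \<open>G \<in> \<G>\<close> unfolding \<G>_def by blast
    have "gdelta_in X (\<Inter>(range (\<lambda>n. \<Union>(F n))))"
    proof (rule gdelta_in_Inter)
      show "\<And>S. S \<in> range (\<lambda>n. \<Union>(F n)) \<Longrightarrow> gdelta_in X S"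
        using PF Uo by (auto simp: P_def subset_iff intro!: open_imp_gdelta_in openin_Union)
    qed auto
    then show ?thesis using G by simp
  qed
  have cov: "\<Union>\<G> = topspace X"
  proof
    show "\<Union>\<G> \<subseteq> topspace X"
    proof
      fix x assume "x \<in> \<Union>\<G>"
      then obtain F where "P F" "x \<in> (\<Inter>n. \<Union>(F n))" unfolding \<G>_def by auto
      then show "x \<in> topspace X" using sub[of F 0] by auto
    qed
    show "topspace X \<subseteq> \<Union>\<G>"
    proof
      fix x assume "x \<in> topspace X"
      then have "compactin X {x}" by simp
      then show "x \<in> \<Union>\<G>" using cK by blast
    qed
  qed
  obtain \<H> where H: "\<H> \<subseteq> \<G>" "countable \<H>" "\<Union>\<H> = topspace X"
  proof -
    have "(\<forall>G\<in>\<G>. gdelta_in X G) \<and> \<Union>\<G> = topspace X \<and>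
          (\<forall>K. K \<subseteq> topspace X \<and> compactin X K \<longrightarrow> (\<exists>G\<in>\<G>. K \<subseteq> G))"
      using gd cov cK by simp
    then have "\<exists>\<H>. \<H> \<subseteq> \<G> \<and> countable \<H> \<and> \<Union>\<H> = topspace X"
      using assms unfolding alster_space_def by (rule_tac mp[OF spec[of _ \<G>]]) simp_all
    then show ?thesis using that by blast
  qed
  have ne: "topspace X \<noteq> {}" using nofin[of "{}" 0] by auto
  then have Hne: "\<H> \<noteq> {}" using H(3) by (metis Union_empty)
  define h where "h = from_nat_into \<H>"
  have hr: "range h = \<H>" using Hne H(2) by (simp add: h_def range_from_nat_into)
  have "\<forall>k. \<exists>F. P F \<and> h k = (\<Inter>n. \<Union>(F n))"
    using hr H(1) unfolding \<G>_def by blast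
  then obtain F where F: "\<And>k. P (F k)" "\<And>k. h k = (\<Inter>n. \<Union>(F k n))" by metis
  define FF where "FF n = (\<Union>k\<le>n. F k n)" for n
  have FFf: "\<forall>n. finite (FF n) \<and> FF n \<subseteq> \<U> n"
    using F(1) unfolding FF_def P_def by auto
  define W where "W n = \<Union>(FF n)" for n
  have Wne: "W n \<noteq> topspace X" for n unfolding W_def by (rule nofin[of "FF n" n]) (use FFf in auto)
  have Wsub: "W n \<subseteq> topspace X" for n
  proof -
    have "FF n \<subseteq> \<U> n" using FFf by auto
    then have "\<Union>(FF n) \<subseteq> \<Union>(\<U> n)" by (rule Union_mono)
    then show ?thesis unfolding W_def using Ucov[of n] by simp
  qed
  have ev: "\<exists>k. \<forall>n\<ge>k. x \<in> W n" if "x \<in> topspace X" for x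
  proof -
    have "x \<in> \<Union>(range h)" using that H(3) hr by simp
    then obtain k where "x \<in> h k" by blast
    then have "\<forall>n. x \<in> \<Union>(F k n)" using F(2) by auto
    then have "\<forall>n\<ge>k. x \<in> W n" unfolding W_def FF_def
    proof (intro allI impI)
      fix n assume a: "\<forall>n. x \<in> \<Union>(F k n)" and kn: "k \<le> n"
      then obtain V where "V \<in> F k n" "x \<in> V" by blast
      moreover have "F k n \<subseteq> (\<Union>k\<le>n. F k n)" using kn by auto
      ultimately show "x \<in> \<Union>(\<Union>k\<le>n. F k n)" by blast
    qed
    then show ?thesis by blast
  qed
  have pc: "point_cofinite_cover X (range W)"
    unfolding point_cofinite_cover_def open_cover_def
  proof (intro conjI ballI)
    show "infinite (range W)"
    proof
      assume fin: "finite (range W)"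
      have "\<exists>V\<in>range W. infinite {n. W n = V}"
      proof (rule ccontr)
        assume "\<not> ?thesis"
        then have "\<And>V. V \<in> range W \<Longrightarrow> finite {n. W n = V}" by blast
        then have "finite (\<Union>V\<in>range W. {n. W n = V})" by (rule finite_UN_I[OF fin])
        moreover have "(\<Union>V\<in>range W. {n. W n = V}) = UNIV" by auto
        ultimately show False by simp
      qed
      then obtain V where V: "V \<in> range W" "infinite {n. W n = V}" by blast
      have "topspace X \<subseteq> V"
      proof
        fix x assume "x \<in> topspace X"
        then obtain k where k: "\<forall>n\<ge>k. x \<in> W n" using ev by blast
        obtain n where "n \<ge> k" "W n = V"
          using V(2) unfolding infinite_nat_iff_unbounded_le by blast
        then show "x \<in> V" using k by auto
      qed
      then show False using V(1) Wne Wsub by blast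
    qed
    fix V assume "V \<in> range W"
    then obtain n where "V = \<Union>(FF n)" unfolding W_def by auto
    moreover have "\<And>S. S \<in> FF n \<Longrightarrow> openin X S" using FFf Uo by auto
    ultimately show "openin X V" by auto
  next
    show "\<Union>(range W) = topspace X"
    proof
      show "\<Union>(range W) \<subseteq> topspace X" using Wsub by blast
      show "topspace X \<subseteq> \<Union>(range W)" using ev by blast
    qed
  next
    fix x assume "x \<in> topspace X"
    then obtain k where k: "\<forall>n\<ge>k. x \<in> W n" using ev by blast
    have "{U \<in> range W. x \<notin> U} \<subseteq> W ` {..<k}"
    proof
      fix U assume "U \<in> {U \<in> range W. x \<notin> U}"
      then obtain m where m: "U = W m" "x \<notin> W m" by auto
      then have "m < k" using k not_le by blast
      then show "U \<in> W ` {..<k}" using m by auto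
    qed
    then show "finite {U \<in> range W. x \<notin> U}" by (rule finite_subset) simp
  qed
  show "\<exists>\<F>. (\<forall>n. finite (\<F> n) \<and> \<F> n \<subseteq> \<U> n) \<and> point_cofinite_cover X (range (\<lambda>n. \<Union>(\<F> n)))"
    using FFf pc unfolding W_def by blast
qed

end
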